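(* Let $\mathbf d=(d_1,\ldots,d_n)$ be a degree sequence, $n\ge 3$, and define $g_n:[n]\to[0,\infty)$ by \[g_n(k)=\frac{k!}{\langle n\rangle_k}\sum_{1\le i_1<\cdots<i_k\le n}\ \prod_{j=1}^k d_{i_j}.\] Then for every $v\in[n]$ and $2\le k\le n-1$, \[\mathbb P(\mathfrak s_n(v)>k)=g_n(k)-\frac{k\,d_v}{n-k+1}\,\mathbb P(\mathfrak s_n(v)>k-1).\]
   Context: A degree sequence is $\mathbf d=(d_1,\ldots,d_n)\in\mathbb N_0^n$ with $\sum_j d_j=n$. Let $\mathfrak F(\mathbf d)=\{f:[n]\to[n]: |f^{-1}(\{i\})|=d_i\ \forall i\}$ and let $F$ be uniform on $\mathfrak F(\mathbf d)$. For $f:V\to V$, $v\in V$, the six-length is $\mathfrak s_f(v)=\min\{k\in\mathbb N: f^{(k)}(v)\in\{f^{(j)}(v):0\le j\le k-1\}\}$ ($f^{(k)}$ the $k$-fold composition, $f^{(0)}=\mathrm{id}$); $\mathfrak s_n(v)=\mathfrak s_F(v)$. $\langle n\rangle_k=n!/(n-k)!$. *)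

theory Defs
  imports Complex_Main "HOL-Library.FuncSet"
begin

definition fibre_funs :: "nat \<Rightarrow> (nat \<Rightarrow> nat) \<Rightarrow> (nat \<Rightarrow> nat) set" where
  "fibre_funs n d = {f \<in> {1..n} \<rightarrow>\<^sub>E {1..n}. \<forall>i\<in>{1..n}. card {x \<in> {1..n}. f x = i} = d i}"

definition six_length :: "(nat \<Rightarrow> nat) \<Rightarrow> nat \<Rightarrow> nat" where
  "six_length f v = (LEAST k. (f ^^ k) v \<in> (\<lambda>j. (f ^^ j) v) ` {..<k})"

text \<open>P(s_n(v) > k) for F uniform on fibre_funs n d.\<close>
definition prob_sl_gt :: "nat \<Rightarrow> (nat \<Rightarrow> nat) \<Rightarrow> nat \<Rightarrow> nat \<Rightarrow> real" where
  "prob_sl_gt n d v k =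
     real (card {f \<in> fibre_funs n d. six_length f v > k}) / real (card (fibre_funs n d))"

definition falling :: "nat \<Rightarrow> nat \<Rightarrow> real" where
  "falling n k = fact n / fact (n - k)"

definition g_fun :: "nat \<Rightarrow> (nat \<Rightarrow> nat) \<Rightarrow> nat \<Rightarrow> real" where
  "g_fun n d k = fact k / falling n k *
     (\<Sum>S\<in>{S. S \<subseteq> {1..n} \<and> card S = k}. \<Prod>i\<in>S. real (d i))"

end

theory Submission
  imports Defs "HOL-Combinatorics.Multiset_Permutations"
begin

definition sw :: "nat \<Rightarrow> nat \<Rightarrow> nat \<Rightarrow> nat" where
  "sw a b z = (if z = a then b else if z = b then a else z)"

lemma sw_sw[simp]: "sw a b (sw a b z) = z" by (auto simp: sw_def)

lemma finite_FF: "finite (fibre_funs n d)"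
  by (rule finite_subset[of _ "{1..n} \<rightarrow>\<^sub>E {1..n}"]) (auto simp: fibre_funs_def intro!: finite_PiE)

lemma sw_FF:
  assumes f: "f \<in> fibre_funs n d" and a: "a \<in> {1..n}" and b: "b \<in> {1..n}"
  shows "f \<circ> sw a b \<in> fibre_funs n d"
proof -
  have fP: "f \<in> {1..n} \<rightarrow>\<^sub>E {1..n}" and fc: "\<forall>i\<in>{1..n}. card {x \<in> {1..n}. f x = i} = d i"
    using f by (auto simp: fibre_funs_def)
  have "f \<circ> sw a b \<in> {1..n} \<rightarrow>\<^sub>E {1..n}"
    using fP a b by (auto simp: sw_def PiE_def Pi_def extensional_def)
  moreover have "card {x \<in> {1..n}. (f \<circ> sw a b) x = i} = d i" if i: "i \<in> {1..n}" for i
  proof -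
    have "{x \<in> {1..n}. (f \<circ> sw a b) x = i} = sw a b ` {x \<in> {1..n}. f x = i}"
      using a b by (auto simp: sw_def image_iff)
    moreover have "inj_on (sw a b) {x \<in> {1..n}. f x = i}"
      by (metis inj_on_def sw_sw)
    ultimately show ?thesis using fc i by (simp add: card_image)
  qed
  ultimately show ?thesis by (auto simp: fibre_funs_def)
qed

lemma card_filter_sum: "finite A \<Longrightarrow> card {x\<in>A. P x} = (\<Sum>x\<in>A. if P x then 1 else 0::nat)"
  by (simp add: sum.If_cases Int_def)

lemma step:
  assumes C: "C \<subseteq> fibre_funs n d" and X: "X \<subseteq> {1..n}"
    and cl: "\<And>f a b. f \<in> C \<Longrightarrow> a \<in> {1..n} - X \<Longrightarrow> b \<in> {1..n} - X \<Longrightarrow> f \<circ> sw a b \<in> C"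
    and r: "\<And>f. f \<in> C \<Longrightarrow> card {z \<in> X. f z = y} = r"
    and x: "x \<in> {1..n} - X" and y: "y \<in> {1..n}"
  shows "card {f \<in> C. f x = y} * (n - card X) = card C * (d y - r)"
proof -
  have fC: "finite C" using C finite_FF finite_subset by blast
  have fX: "finite X" using X finite_subset by blast
  have const: "card {f \<in> C. f a = y} = card {f \<in> C. f x = y}" if a: "a \<in> {1..n} - X" for a
  proof -
    have "bij_betw (\<lambda>f. f \<circ> sw a x) {f \<in> C. f a = y} {f \<in> C. f x = y}"
    proof (rule bij_betw_byWitness[where f' = "\<lambda>f. f \<circ> sw a x"])
      have inv: "\<And>g. g \<circ> sw a x \<circ> sw a x = g" by (simp add: fun_eq_iff)
      have e1: "\<And>g. (g \<circ> sw a x) a = g x" and e2: "\<And>g. (g \<circ> sw a x) x = g a" by (simp_all add: sw_def)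
      show "\<forall>f\<in>{f \<in> C. f a = y}. f \<circ> sw a x \<circ> sw a x = f" using inv by blast
      show "\<forall>f\<in>{f \<in> C. f x = y}. f \<circ> sw a x \<circ> sw a x = f" using inv by blast
      show "(\<lambda>f. f \<circ> sw a x) ` {f \<in> C. f a = y} \<subseteq> {f \<in> C. f x = y}"
        using cl[OF _ a x] e2 by auto
      show "(\<lambda>f. f \<circ> sw a x) ` {f \<in> C. f x = y} \<subseteq> {f \<in> C. f a = y}"
        using cl[OF _ a x] e1 by auto
    qed
    then show ?thesis by (simp add: bij_betw_same_card)
  qed
  have "(\<Sum>a\<in>{1..n} - X. card {f \<in> C. f a = y}) = (\<Sum>a\<in>{1..n} - X. \<Sum>f\<in>C. if f a = y then 1 else 0)"
    by (intro sum.cong refl card_filter_sum fC)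
  also have "\<dots> = (\<Sum>f\<in>C. \<Sum>a\<in>{1..n} - X. if f a = y then 1 else 0)"
    by (rule sum.swap)
  also have "\<dots> = (\<Sum>f\<in>C. card {a \<in> {1..n} - X. f a = y})"
    by (intro sum.cong refl card_filter_sum[symmetric]) simp
  also have "\<dots> = (\<Sum>f\<in>C. d y - r)"
  proof (rule sum.cong[OF refl])
    fix f assume f: "f \<in> C"
    have "{a \<in> {1..n} - X. f a = y} = {a \<in> {1..n}. f a = y} - {z \<in> X. f z = y}" by auto
    moreover have "{z \<in> X. f z = y} \<subseteq> {a \<in> {1..n}. f a = y}" using X by auto
    ultimately have "card {a \<in> {1..n} - X. f a = y} = card {a \<in> {1..n}. f a = y} - card {z \<in> X. f z = y}"
      by (simp add: card_Diff_subset fX)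
    moreover have "card {a \<in> {1..n}. f a = y} = d y" using f C y by (auto simp: fibre_funs_def)
    ultimately show "card {a \<in> {1..n} - X. f a = y} = d y - r" using r f by simp
  qed
  finally have "(\<Sum>a\<in>{1..n} - X. card {f \<in> C. f x = y}) = card C * (d y - r)"
    using const by simp
  moreover have "card ({1..n} - X) = n - card X" using X fX by (simp add: card_Diff_subset)
  ultimately show ?thesis by (simp add: mult.commute)
qed


definition Cp :: "nat \<Rightarrow> (nat \<Rightarrow> nat) \<Rightarrow> (nat \<Rightarrow> nat) \<Rightarrow> nat \<Rightarrow> (nat \<Rightarrow> nat) set" where
  "Cp n d p k = {f \<in> fibre_funs n d. \<forall>i<k. f (p i) = p (Suc i)}"

lemma path_count:
  assumes "inj_on p {..k}" "p ` {..k} \<subseteq> {1..n}"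
  shows "card (Cp n d p k) * (\<Prod>i<k. n - i) = card (fibre_funs n d) * (\<Prod>i<k. d (p (Suc i)))"
  using assms
proof (induction k)
  case 0
  then show ?case by (simp add: Cp_def)
next
  case (Suc k)
  have inj: "inj_on p {..k}" using Suc.prems(1) by (rule inj_on_subset) auto
  have sub: "p ` {..k} \<subseteq> {1..n}" using Suc.prems(2) by auto
  have IH: "card (Cp n d p k) * (\<Prod>i<k. n - i) = card (fibre_funs n d) * (\<Prod>i<k. d (p (Suc i)))"
    using Suc.IH[OF inj sub] .
  define X where "X = p ` {..<k}"
  have X: "X \<subseteq> {1..n}" using sub by (auto simp: X_def)
  have cardX: "card X = k" unfolding X_def
    by (subst card_image) (auto intro: inj_on_subset[OF inj])
  have xX: "p k \<in> {1..n} - X" using sub inj by (auto simp: X_def inj_on_def) (metis atMost_iff less_imp_le_nat less_irrefl order_refl)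
  have yn: "p (Suc k) \<in> {1..n}" using Suc.prems(2) by auto
  have "card {f \<in> Cp n d p k. f (p k) = p (Suc k)} * (n - card X) = card (Cp n d p k) * (d (p (Suc k)) - 0)"
  proof (rule step[OF _ X _ _ xX yn])
    show "Cp n d p k \<subseteq> fibre_funs n d" by (auto simp: Cp_def)
  next
    fix f a b assume f: "f \<in> Cp n d p k" and a: "a \<in> {1..n} - X" and b: "b \<in> {1..n} - X"
    have "(f \<circ> sw a b) (p i) = p (Suc i)" if "i < k" for i
    proof -
      have "p i \<in> X" using that by (auto simp: X_def)
      then have "sw a b (p i) = p i" using a b by (auto simp: sw_def)
      then show ?thesis using f that by (simp add: Cp_def)
    qed
    moreover have "f \<circ> sw a b \<in> fibre_funs n d" using f a b sw_FF[of f n d a b] by (auto simp: Cp_def)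
    ultimately show "f \<circ> sw a b \<in> Cp n d p k" by (auto simp: Cp_def)
  next
    fix f assume f: "f \<in> Cp n d p k"
    have "{z \<in> X. f z = p (Suc k)} = {}"
    proof (rule ccontr)
      assume "{z \<in> X. f z = p (Suc k)} \<noteq> {}"
      then obtain i where i: "i < k" "f (p i) = p (Suc k)" by (auto simp: X_def)
      then have "p (Suc i) = p (Suc k)" using f by (simp add: Cp_def)
      moreover have "Suc i \<in> {..Suc k}" "Suc k \<in> {..Suc k}" using i by auto
      ultimately have "Suc i = Suc k" using Suc.prems(1) by (meson inj_onD)
      then show False using i by simp
    qed
    then show "card {z \<in> X. f z = p (Suc k)} = 0" by (simp only: card.empty)
  qed
  moreover have "{f \<in> Cp n d p k. f (p k) = p (Suc k)} = Cp n d p (Suc k)"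
    by (auto simp: Cp_def less_Suc_eq)
  ultimately have E: "card (Cp n d p (Suc k)) * (n - k) = card (Cp n d p k) * d (p (Suc k))"
    using cardX by simp
  have "card (Cp n d p (Suc k)) * (\<Prod>i<Suc k. n - i) = (card (Cp n d p (Suc k)) * (n - k)) * (\<Prod>i<k. n - i)"
    by (simp add: algebra_simps)
  also have "\<dots> = card (Cp n d p k) * (\<Prod>i<k. n - i) * d (p (Suc k))"
    by (simp only: E) (simp add: algebra_simps)
  also have "\<dots> = card (fibre_funs n d) * (\<Prod>i<Suc k. d (p (Suc i)))"
    by (simp only: IH) (simp add: algebra_simps)
  finally show ?case .
qed

lemma iter_in:
  assumes "f \<in> fibre_funs n d" "v \<in> {1..n}"
  shows "(f ^^ j) v \<in> {1..n}"
proof (induction j)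
  case 0 then show ?case using assms(2) by simp
next
  case (Suc j)
  have "f \<in> {1..n} \<rightarrow>\<^sub>E {1..n}" using assms(1) by (simp add: fibre_funs_def)
  then show ?case using Suc by (auto simp: PiE_def Pi_def)
qed

lemma six_gt:
  assumes f: "f \<in> fibre_funs n d" and v: "v \<in> {1..n}"
  shows "k < six_length f v \<longleftrightarrow> inj_on (\<lambda>j. (f ^^ j) v) {..k}"
proof -
  define P where "P = (\<lambda>k. (f ^^ k) v \<in> (\<lambda>j. (f ^^ j) v) ` {..<k})"
  have sl: "six_length f v = (LEAST k. P k)" by (simp add: six_length_def P_def)
  have injP: "inj_on (\<lambda>j. (f ^^ j) v) {..m} \<longleftrightarrow> (\<forall>j\<le>m. \<not> P j)" for m
  proof
    assume inj: "inj_on (\<lambda>j. (f ^^ j) v) {..m}"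
    show "\<forall>j\<le>m. \<not> P j"
    proof (intro allI impI notI)
      fix j assume j: "j \<le> m" "P j"
      then obtain i where i: "i < j" "(f ^^ j) v = (f ^^ i) v" by (auto simp: P_def)
      then have "j = i" using inj_onD[OF inj i(2)] j(1) i(1) by auto
      then show False using i by simp
    qed
  next
    assume np: "\<forall>j\<le>m. \<not> P j"
    show "inj_on (\<lambda>j. (f ^^ j) v) {..m}"
    proof (rule inj_onI)
      fix a b assume a: "a \<in> {..m}" and b: "b \<in> {..m}" and e: "(f ^^ a) v = (f ^^ b) v"
      show "a = b"
      proof (rule ccontr)
        assume "a \<noteq> b"
        then consider "a < b" | "b < a" by linarith
        then show False
        proof cases
          case 1 then have "P b" using e unfolding P_def by (intro image_eqI[of _ _ a]) auto
          then show False using np b by auto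
        next
          case 2 then have "P a" using e unfolding P_def by (intro image_eqI[of _ _ b]) auto
          then show False using np a by auto
        qed
      qed
    qed
  qed
  have ex: "\<exists>j. P j"
  proof (rule ccontr)
    assume "\<not> (\<exists>j. P j)"
    then have "inj_on (\<lambda>j. (f ^^ j) v) {..n}" using injP by blast
    moreover have "(\<lambda>j. (f ^^ j) v) ` {..n} \<subseteq> {1..n}" using iter_in[OF f v] by auto
    ultimately have "card {..n} \<le> card {1..n}" by (rule card_inj_on_le) auto
    then show False by simp
  qed
  have "k < (LEAST k. P k) \<longleftrightarrow> (\<forall>j\<le>k. \<not> P j)"
  proof
    assume "k < (LEAST k. P k)"
    then show "\<forall>j\<le>k. \<not> P j" using Least_le[of P] by (meson le_trans not_less)
  next
    assume "\<forall>j\<le>k. \<not> P j"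
    moreover have "P (LEAST k. P k)" using ex by (rule LeastI_ex)
    ultimately show "k < (LEAST k. P k)" using not_less by blast
  qed
  then show ?thesis using sl injP by simp
qed

definition Lset :: "nat \<Rightarrow> nat \<Rightarrow> nat \<Rightarrow> nat list set" where
  "Lset n v k = {ys. distinct ys \<and> length ys = k \<and> set ys \<subseteq> {1..n} - {v}}"

lemma finite_Lset: "finite (Lset n v k)"
  by (rule finite_subset[of _ "{xs. set xs \<subseteq> {1..n} \<and> length xs = k}"])
     (auto simp: Lset_def intro: finite_lists_length_eq)

lemma fiber_eq:
  assumes v: "v \<in> {1..n}" and ys: "ys \<in> Lset n v k"
  shows "{f \<in> {f \<in> fibre_funs n d. inj_on (\<lambda>j. (f ^^ j) v) {..k}}. map (\<lambda>j. (f ^^ Suc j) v) [0..<k] = ys}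
         = Cp n d ((!) (v # ys)) k"
    (is "?A = ?B")
proof -
  define p where "p = (!) (v # ys)"
  have len: "length ys = k" and dist: "distinct (v # ys)" using ys by (auto simp: Lset_def)
  have pinj: "inj_on p {..k}" unfolding p_def using dist len
    by (intro inj_on_nth) auto
  show ?thesis
  proof
    show "?A \<subseteq> ?B"
    proof
      fix f assume f: "f \<in> ?A"
      have eq: "map (\<lambda>j. (f ^^ Suc j) v) [0..<k] = ys" using f by blast
      have hm: "(f ^^ Suc j) v = ys ! j" if "j < k" for j
      proof -
        have "ys ! j = map (\<lambda>j. (f ^^ Suc j) v) [0..<k] ! j" by (simp only: eq)
        also have "\<dots> = (f ^^ Suc j) v" using that by (simp del: funpow.simps)
        finally show ?thesis by simp
      qed
      have pi: "(f ^^ i) v = p i" if "i \<le> k" for i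
      proof (cases i)
        case 0 then show ?thesis by (simp add: p_def)
      next
        case (Suc j) then show ?thesis using hm[of j] that by (simp add: p_def)
      qed
      have "f (p i) = p (Suc i)" if "i < k" for i
        using pi[of i] pi[of "Suc i"] that by simp
      then show "f \<in> ?B" using f by (auto simp: Cp_def p_def)
    qed
  next
    show "?B \<subseteq> ?A"
    proof
      fix f assume f: "f \<in> ?B"
      have fF: "f \<in> fibre_funs n d" using f by (simp add: Cp_def)
      have pi: "i \<le> k \<Longrightarrow> (f ^^ i) v = p i" for i
      proof (induction i)
        case 0 then show ?case by (simp add: p_def)
      next
        case (Suc i)
        then have "(f ^^ Suc i) v = f (p i)" by simp
        also have "\<dots> = p (Suc i)" using f Suc.prems by (auto simp: Cp_def p_def)
        finally show ?case .
      qed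
      have "inj_on (\<lambda>j. (f ^^ j) v) {..k}"
        using pinj by (rule inj_on_cong[THEN iffD1, rotated]) (simp add: pi)
      moreover have "map (\<lambda>j. (f ^^ Suc j) v) [0..<k] = ys"
      proof (rule nth_equalityI)
        show "length (map (\<lambda>j. (f ^^ Suc j) v) [0..<k]) = length ys" using len by simp
        fix i assume "i < length (map (\<lambda>j. (f ^^ Suc j) v) [0..<k])"
        then have i: "i < k" by simp
        then show "map (\<lambda>j. (f ^^ Suc j) v) [0..<k] ! i = ys ! i"
          using pi[of "Suc i"] by (simp add: p_def del: funpow.simps)
      qed
      ultimately show "f \<in> ?A" using fF by simp
    qed
  qed
qed

lemma count_gt:
  assumes v: "v \<in> {1..n}"
  shows "card {f \<in> fibre_funs n d. k < six_length f v} * (\<Prod>i<k. n - i)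
         = card (fibre_funs n d) * (\<Sum>ys\<in>Lset n v k. \<Prod>i<k. d (ys ! i))"
proof -
  define A where "A = {f \<in> fibre_funs n d. inj_on (\<lambda>j. (f ^^ j) v) {..k}}"
  define h where "h = (\<lambda>f::nat\<Rightarrow>nat. map (\<lambda>j. (f ^^ Suc j) v) [0..<k])"
  have A: "{f \<in> fibre_funs n d. k < six_length f v} = A"
    using six_gt[OF _ v] by (auto simp: A_def)
  have fA: "finite A" using finite_FF by (auto simp: A_def)
  have hA: "h ` A \<subseteq> Lset n v k"
  proof
    fix ys assume "ys \<in> h ` A"
    then obtain f where f: "f \<in> A" and ys: "ys = h f" by auto
    have fF: "f \<in> fibre_funs n d" and inj: "inj_on (\<lambda>j. (f ^^ j) v) {..k}" using f by (auto simp: A_def)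
    have len: "length ys = k" by (simp add: ys h_def)
    have nth: "ys ! j = (f ^^ Suc j) v" if "j < k" for j
      using that by (simp add: ys h_def del: funpow.simps)
    have "distinct ys"
    proof (subst distinct_conv_nth, intro allI impI)
      fix i j assume "i < length ys" "j < length ys" "i \<noteq> j"
      then show "ys ! i \<noteq> ys ! j" using len nth[of i] nth[of j] inj_onD[OF inj, of "Suc i" "Suc j"]
        by auto
    qed
    moreover have "set ys \<subseteq> {1..n} - {v}"
    proof
      fix x assume "x \<in> set ys"
      then obtain j where j: "j < k" "x = ys ! j" using len by (auto simp: in_set_conv_nth)
      then have x: "x = (f ^^ Suc j) v" using nth by simp
      have "x \<in> {1..n}" unfolding x by (rule iter_in[OF fF v])
      moreover have "x \<noteq> v"
      proof
        assume "x = v"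
        then have "(f ^^ Suc j) v = (f ^^ 0) v" using x by simp
        then have "Suc j = 0" using inj_onD[OF inj] j by (metis atMost_iff le0 less_imp_le_nat Suc_leI)
        then show False by simp
      qed
      ultimately show "x \<in> {1..n} - {v}" by simp
    qed
    ultimately show "ys \<in> Lset n v k" using len by (simp add: Lset_def)
  qed
  have "card A = (\<Sum>f\<in>A. 1)" by simp
  also have "\<dots> = (\<Sum>ys\<in>Lset n v k. \<Sum>f\<in>{f. f \<in> A \<and> h f = ys}. 1)"
    by (rule sum.group[symmetric, OF fA finite_Lset hA])
  also have "\<dots> = (\<Sum>ys\<in>Lset n v k. card (Cp n d ((!) (v # ys)) k))"
  proof (rule sum.cong[OF refl])
    fix ys assume ys: "ys \<in> Lset n v k"
    have "{f. f \<in> A \<and> h f = ys} = Cp n d ((!) (v # ys)) k"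
      using fiber_eq[OF v ys, of d] by (simp add: A_def h_def)
    then show "(\<Sum>f\<in>{f. f \<in> A \<and> h f = ys}. 1) = card (Cp n d ((!) (v # ys)) k)" by simp
  qed
  finally have cA: "card A = (\<Sum>ys\<in>Lset n v k. card (Cp n d ((!) (v # ys)) k))" .
  have "card A * (\<Prod>i<k. n - i) = (\<Sum>ys\<in>Lset n v k. card (Cp n d ((!) (v # ys)) k) * (\<Prod>i<k. n - i))"
    by (simp add: cA sum_distrib_right)
  also have "\<dots> = (\<Sum>ys\<in>Lset n v k. card (fibre_funs n d) * (\<Prod>i<k. d (ys ! i)))"
  proof (rule sum.cong[OF refl])
    fix ys assume ys: "ys \<in> Lset n v k"
    have len: "length ys = k" and dist: "distinct (v # ys)" and sub: "set (v # ys) \<subseteq> {1..n}"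
      using ys v by (auto simp: Lset_def)
    have "inj_on ((!) (v # ys)) {..k}" using dist len by (intro inj_on_nth) auto
    moreover have "(!) (v # ys) ` {..k} \<subseteq> {1..n}"
    proof
      fix x assume "x \<in> (!) (v # ys) ` {..k}"
      then obtain i where i: "i \<le> k" "x = (v # ys) ! i" by auto
      then have "x \<in> set (v # ys)" using len by (simp del: nth_Cons_Suc list.set)
      then show "x \<in> {1..n}" using sub by blast
    qed
    ultimately show "card (Cp n d ((!) (v # ys)) k) * (\<Prod>i<k. n - i) = card (fibre_funs n d) * (\<Prod>i<k. d (ys ! i))"
      using path_count by simp
  qed
  also have "\<dots> = card (fibre_funs n d) * (\<Sum>ys\<in>Lset n v k. \<Prod>i<k. d (ys ! i))"
    by (simp add: sum_distrib_left)
  finally show ?thesis using A by simp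
qed

lemma sum_Lset:
  "(\<Sum>ys\<in>Lset n v k. \<Prod>i<k. d (ys ! i)) = fact k * (\<Sum>S\<in>{S. S \<subseteq> {1..n} - {v} \<and> card S = k}. \<Prod>i\<in>S. d i)"
proof -
  define T where "T = {S. S \<subseteq> {1..n} - {v} \<and> card S = k}"
  have fT: "finite T" by (rule finite_subset[of _ "Pow ({1..n} - {v})"]) (auto simp: T_def)
  have sT: "set ` Lset n v k \<subseteq> T" by (auto simp: T_def Lset_def distinct_card)
  have pr: "(\<Prod>i<k. d (ys ! i)) = (\<Prod>i\<in>set ys. d i)" if ys: "ys \<in> Lset n v k" for ys
  proof -
    have len: "length ys = k" and dist: "distinct ys" using ys by (auto simp: Lset_def)
    have "set ys = (!) ys ` {..<k}" using len by (auto simp: set_conv_nth)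
    moreover have "inj_on ((!) ys) {..<k}" using dist len by (intro inj_on_nth) auto
    ultimately show ?thesis by (simp add: prod.reindex)
  qed
  have "(\<Sum>ys\<in>Lset n v k. \<Prod>i<k. d (ys ! i)) = (\<Sum>ys\<in>Lset n v k. \<Prod>i\<in>set ys. d i)"
    using pr by (rule sum.cong[OF refl])
  also have "\<dots> = (\<Sum>S\<in>T. \<Sum>ys\<in>{ys. ys \<in> Lset n v k \<and> set ys = S}. \<Prod>i\<in>set ys. d i)"
    by (rule sum.group[symmetric, OF finite_Lset fT sT])
  also have "\<dots> = (\<Sum>S\<in>T. fact k * (\<Prod>i\<in>S. d i))"
  proof (rule sum.cong[OF refl])
    fix S assume S: "S \<in> T"
    have fS: "finite S" and cS: "card S = k" using S by (auto simp: T_def intro: finite_subset)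
    have eq: "{ys. ys \<in> Lset n v k \<and> set ys = S} = permutations_of_set S"
    proof (intro set_eqI iffI)
      fix ys assume "ys \<in> {ys. ys \<in> Lset n v k \<and> set ys = S}"
      then show "ys \<in> permutations_of_set S" by (auto simp: Lset_def permutations_of_set_def)
    next
      fix ys assume a: "ys \<in> permutations_of_set S"
      then have ss: "set ys = S" "distinct ys" by (auto simp: permutations_of_set_def)
      then have "length ys = k" using cS distinct_card by metis
      then show "ys \<in> {ys. ys \<in> Lset n v k \<and> set ys = S}" using ss S by (auto simp: Lset_def T_def)
    qed
    have "(\<Sum>ys\<in>{ys. ys \<in> Lset n v k \<and> set ys = S}. \<Prod>i\<in>set ys. d i) = (\<Sum>ys\<in>permutations_of_set S. \<Prod>i\<in>S. d i)"
      unfolding eq by (rule sum.cong[OF refl]) (simp add: permutations_of_set_def)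
    also have "\<dots> = fact k * (\<Prod>i\<in>S. d i)" using fS cS by simp
    finally show "(\<Sum>ys\<in>{ys. ys \<in> Lset n v k \<and> set ys = S}. \<Prod>i\<in>set ys. d i) = fact k * (\<Prod>i\<in>S. d i)" .
  qed
  also have "\<dots> = fact k * (\<Sum>S\<in>T. \<Prod>i\<in>S. d i)" by (simp add: sum_distrib_left)
  finally show ?thesis by (simp add: T_def)
qed

lemma FF_nonempty:
  assumes "(\<Sum>j\<in>{1..n}. d j) = n"
  shows "fibre_funs n d \<noteq> {}"
proof -
  define Sg where "Sg = (SIGMA i:{1..n}. {..<d i})"
  have "card Sg = (\<Sum>i\<in>{1..n}. card {..<d i})" unfolding Sg_def by (rule card_SigmaI) auto
  then have cS: "card Sg = n" using assms by simp
  have fS: "finite Sg" unfolding Sg_def by auto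
  obtain h where h: "bij_betw h {1..n} Sg" using finite_same_card_bij[of "{1..n}" Sg] fS cS by auto
  define f where "f = (\<lambda>x. if x \<in> {1..n} then fst (h x) else undefined)"
  have hS: "h x \<in> Sg" if "x \<in> {1..n}" for x using h that by (auto simp: bij_betw_def)
  have hS': "fst (h x) \<in> {1..n}" if "x \<in> {1..n}" for x
    using hS[OF that] by (cases "h x") (auto simp: Sg_def)
  have "f \<in> {1..n} \<rightarrow>\<^sub>E {1..n}"
    using hS' by (auto simp: f_def PiE_def Pi_def extensional_def)
  moreover have "card {x \<in> {1..n}. f x = i} = d i" if i: "i \<in> {1..n}" for i
  proof -
    have inj: "inj_on h {x \<in> {1..n}. f x = i}" using h by (auto simp: bij_betw_def intro: inj_on_subset)
    have "h ` {x \<in> {1..n}. f x = i} = {p \<in> Sg. fst p = i}"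
    proof -
      have "h ` {1..n} = Sg" using h by (simp add: bij_betw_def)
      then show ?thesis by (auto simp: f_def)
    qed
    also have "{p \<in> Sg. fst p = i} = {i} \<times> {..<d i}" using i by (auto simp: Sg_def)
    finally have "card (h ` {x \<in> {1..n}. f x = i}) = d i" by (simp add: card_cartesian_product)
    then show ?thesis using inj by (simp add: card_image)
  qed
  ultimately have "f \<in> fibre_funs n d" by (auto simp: fibre_funs_def)
  then show ?thesis by auto
qed

lemma fact_prod: "k \<le> n \<Longrightarrow> fact n = fact (n - k) * (\<Prod>i<k. n - i)"
proof (induction k)
  case 0 then show ?case by simp
next
  case (Suc k)
  have e: "n - k = Suc (n - Suc k)" using Suc.prems by simp
  have "fact n = fact (n - k) * (\<Prod>i<k. n - i)" using Suc by simp
  also have "fact (n - k) = (n - k) * fact (n - Suc k)" by (simp only: e fact_Suc) simp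
  finally show ?case by (simp add: algebra_simps)
qed

lemma falling_prod: "k \<le> n \<Longrightarrow> falling n k = real (\<Prod>i<k. n - i)"
proof -
  assume k: "k \<le> n"
  have "real (fact n) = real (fact (n - k)) * real (\<Prod>i<k. n - i)"
    using fact_prod[OF k] by (metis of_nat_mult)
  then show ?thesis unfolding falling_def by (simp add: of_nat_fact)
qed

lemma split_sum:
  fixes w :: "nat \<Rightarrow> real"
  assumes v: "v \<in> {1..n}" and k: "1 \<le> k"
  shows "(\<Sum>S\<in>{S. S \<subseteq> {1..n} \<and> card S = k}. \<Prod>i\<in>S. w i)
       = (\<Sum>S\<in>{S. S \<subseteq> {1..n} - {v} \<and> card S = k}. \<Prod>i\<in>S. w i)
         + w v * (\<Sum>S\<in>{S. S \<subseteq> {1..n} - {v} \<and> card S = k - 1}. \<Prod>i\<in>S. w i)"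
proof -
  define B where "B = {1..n} - {v}"
  define T1 where "T1 = {S. S \<subseteq> B \<and> card S = k}"
  define T2 where "T2 = {S. S \<subseteq> B \<and> card S = k - 1}"
  have fB: "finite B" by (simp add: B_def)
  have fin: "finite T1" "finite T2" by (rule finite_subset[of _ "Pow B"], auto simp: T1_def T2_def fB)+
  have eq: "{S. S \<subseteq> {1..n} \<and> card S = k} = T1 \<union> insert v ` T2"
  proof
    show "{S. S \<subseteq> {1..n} \<and> card S = k} \<subseteq> T1 \<union> insert v ` T2"
    proof
      fix S assume S: "S \<in> {S. S \<subseteq> {1..n} \<and> card S = k}"
      have fS: "finite S" using S by (auto intro: finite_subset)
      show "S \<in> T1 \<union> insert v ` T2"
      proof (cases "v \<in> S")
        case True
        then have "S = insert v (S - {v})" "S - {v} \<in> T2"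
          using S fS by (auto simp: T2_def B_def)
        then show ?thesis by blast
      next
        case False then show ?thesis using S by (auto simp: T1_def B_def)
      qed
    qed
  next
    show "T1 \<union> insert v ` T2 \<subseteq> {S. S \<subseteq> {1..n} \<and> card S = k}"
    proof
      fix S assume "S \<in> T1 \<union> insert v ` T2"
      then consider "S \<in> T1" | U where "U \<in> T2" "S = insert v U" by blast
      then show "S \<in> {S. S \<subseteq> {1..n} \<and> card S = k}"
      proof cases
        case 1 then show ?thesis by (auto simp: T1_def B_def)
      next
        case 2
        have fU: "finite U" using 2 fB by (auto simp: T2_def intro: finite_subset)
        have "v \<notin> U" using 2 by (auto simp: T2_def B_def)
        then have "card S = k" using 2 fU k by (simp add: T2_def)
        then show ?thesis using 2 v by (auto simp: T2_def B_def)
      qed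
    qed
  qed
  have disj: "T1 \<inter> insert v ` T2 = {}" by (auto simp: T1_def B_def)
  have inj: "inj_on (insert v) T2"
  proof (rule inj_onI)
    fix x y assume xy: "x \<in> T2" "y \<in> T2" "insert v x = insert v y"
    then have "v \<notin> x" "v \<notin> y" by (auto simp: T2_def B_def)
    then show "x = y" using xy(3) by (metis Diff_insert_absorb)
  qed
  have "(\<Sum>S\<in>insert v ` T2. \<Prod>i\<in>S. w i) = (\<Sum>U\<in>T2. \<Prod>i\<in>insert v U. w i)"
    by (simp add: sum.reindex[OF inj])
  also have "\<dots> = (\<Sum>U\<in>T2. w v * (\<Prod>i\<in>U. w i))"
  proof (rule sum.cong[OF refl])
    fix U assume U: "U \<in> T2"
    have "finite U" "v \<notin> U" using U fB by (auto simp: T2_def B_def intro: finite_subset)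
    then show "(\<Prod>i\<in>insert v U. w i) = w v * (\<Prod>i\<in>U. w i)" by simp
  qed
  finally have "(\<Sum>S\<in>insert v ` T2. \<Prod>i\<in>S. w i) = w v * (\<Sum>U\<in>T2. \<Prod>i\<in>U. w i)"
    by (simp add: sum_distrib_left)
  then show ?thesis unfolding eq
    by (subst sum.union_disjoint) (use fin disj in \<open>auto simp: T1_def T2_def B_def\<close>)
qed

lemma prob_formula:
  assumes v: "v \<in> {1..n}" and N: "card (fibre_funs n d) > 0" and m: "m < n"
  shows "prob_sl_gt n d v m = fact m * (\<Sum>S\<in>{S. S \<subseteq> {1..n} - {v} \<and> card S = m}. \<Prod>i\<in>S. real (d i))
           / real (\<Prod>i<m. n - i)"
proof -
  define cA where "cA = card {f \<in> fibre_funs n d. m < six_length f v}"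
  define Fm where "Fm = (\<Prod>i<m. n - i)"
  define Qn where "Qn = (\<Sum>S\<in>{S. S \<subseteq> {1..n} - {v} \<and> card S = m}. \<Prod>i\<in>S. d i)"
  have eq: "cA * Fm = card (fibre_funs n d) * (fact m * Qn)"
    unfolding cA_def Fm_def Qn_def using count_gt[OF v, where d=d and k=m] sum_Lset[where n=n and v=v and k=m and d=d] by simp
  have Fpos: "Fm > 0" unfolding Fm_def using m by (simp add: prod_pos)
  have "real cA * real Fm = real (card (fibre_funs n d)) * (fact m * real Qn)"
    using eq by (metis of_nat_mult of_nat_fact)
  then have "real cA / real (card (fibre_funs n d)) = fact m * real Qn / real Fm"
    using N Fpos by (simp add: field_simps)
  moreover have "real Qn = (\<Sum>S\<in>{S. S \<subseteq> {1..n} - {v} \<and> card S = m}. \<Prod>i\<in>S. real (d i))"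
    by (simp add: Qn_def)
  ultimately show ?thesis by (simp add: prob_sl_gt_def cA_def Fm_def)
qed

lemma alg:
  fixes F c kk b w Qk Qj :: real
  assumes "F > 0" "c > 0"
  shows "kk * b * Qk / (F * c) = kk * b / (F * c) * (Qk + w * Qj) - kk * w / c * (b * Qj / F)"
proof -
  have "kk * b / (F * c) * (Qk + w * Qj) = kk * b * Qk / (F * c) + kk * b * w * Qj / (F * c)"
    by (simp add: add_divide_distrib[symmetric] algebra_simps)
  moreover have "kk * w / c * (b * Qj / F) = kk * b * w * Qj / (F * c)"
    by (simp add: field_simps)
  ultimately show ?thesis by simp
qed

theorem lemma3p3:
  fixes n :: nat and d :: "nat \<Rightarrow> nat" and v k :: nat
  assumes "n \<ge> 3"
    and "(\<Sum>j\<in>{1..n}. d j) = n"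
    and "v \<in> {1..n}"
    and "2 \<le> k" and "k \<le> n - 1"
  shows "prob_sl_gt n d v k =
           g_fun n d k - real k * real (d v) / (real n - real k + 1) * prob_sl_gt n d v (k - 1)"
proof -
  have N: "card (fibre_funs n d) > 0"
    using FF_nonempty[OF assms(2)] finite_FF[of n d] by (simp add: card_gt_0_iff)
  have kn: "k < n" using assms by simp
  define Q where "Q = (\<lambda>m. \<Sum>S\<in>{S. S \<subseteq> {1..n} - {v} \<and> card S = m}. \<Prod>i\<in>S. real (d i))"
  define F where "F = (\<lambda>m. real (\<Prod>i<m. n - i))"
  obtain j where j: "k = Suc j" using assms(4) by (cases k) auto
  have P1: "prob_sl_gt n d v k = fact k * Q k / F k"
    using prob_formula[OF assms(3) N kn] by (simp add: Q_def F_def)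
  have P2: "prob_sl_gt n d v (k - 1) = fact j * Q j / F j"
    using prob_formula[OF assms(3) N, of j] kn j by (simp add: Q_def F_def)
  have Fk: "F k = F j * (real n - real k + 1)"
    using j kn by (simp add: F_def of_nat_diff)
  have "(\<Prod>i<j. n - i) > 0" using kn j by (simp add: prod_pos)
  then have Fj: "F j > 0" by (simp only: F_def of_nat_0_less_iff)
  have fk: "(fact k :: real) = real k * fact j" using j by simp
  have g: "g_fun n d k = fact k / F k * (Q k + real (d v) * Q j)"
    unfolding g_fun_def F_def Q_def
    using falling_prod[of k n] kn split_sum[OF assms(3), of k "\<lambda>i. real (d i)"] assms(4) j
    by simp
  have pos: "real n - real k + 1 > 0" using kn by simp
  show ?thesis
    unfolding P1 P2 g Fk fk j[symmetric] using alg[OF Fj pos] by simp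
qed

end
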